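(* Let $\Gamma>1$ and let $(\rho_L,u_L,v_L,p_L)$, $(\rho_R,u_R,v_R,p_R)$ be two states with $\rho_{L},\rho_R,p_L,p_R>0$ and $u_L^2+v_L^2<1$, $u_R^2+v_R^2<1$. Set $W=1/\sqrt{1-u^2-v^2}$ at each state and $z_1=\rho$, $z_2=\rho/p$, $z_3=u$, $z_4=v$. Write $L_x=\mathcal L_x(z_3,z_4)$, $L_y=\mathcal L_y(z_3,z_4)$, $\alpha=1+\frac{1}{(\Gamma-1)\{\!\{z_2\}\!\}^{\ln}}$ and \[ Q=\{\!\{z_2\}\!\}\{\!\{W\}\!\}^2+\{\!\{z_2\}\!\}\big(\{\!\{z_3\}\!\}\{\!\{W\}\!\}L_x-\{\!\{uW\}\!\}L_x+\{\!\{z_4\}\!\}\{\!\{W\}\!\}L_y-\{\!\{vW\}\!\}L_y\big). \] Define the $x$-directional flux $\tilde{\mathbf F}=(\tilde F_1,\tilde F_2,\tilde F_3,\tilde F_4)^T$ by \[ \tilde F_1=\{\!\{z_1\}\!\}^{\ln}\{\!\{uW\}\!\}, \] \[ \tilde F_2=Q^{-1}\Big\{\alpha\{\!\{z_2\}\!\}L_x\tilde F_1+\{\!\{z_1\}\!\}\big(\{\!\{W\}\!\}^2-\{\!\{vW\}\!\}L_y\big)+\{\!\{z_1\}\!\}\{\!\{W\}\!\}\big(\{\!\{z_3\}\!\}L_x+\{\!\{z_4\}\!\}L_y\big)\Big\}, \] \[ \tilde F_3=Q^{-1}\Big\{\alpha\{\!\{z_2\}\!\}L_y\tilde F_1+\{\!\{z_1\}\!\}\{\!\{uW\}\!\}L_y\Big\},\qquad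 \tilde F_4=\{\!\{W\}\!\}^{-1}\big(\alpha\tilde F_1+\{\!\{uW\}\!\}\tilde F_2+\{\!\{vW\}\!\}\tilde F_3\big), \] and the $y$-directional flux $\tilde{\mathbf G}=(\tilde G_1,\tilde G_2,\tilde G_3,\tilde G_4)^T$ by \[ \tilde G_1=\{\!\{z_1\}\!\}^{\ln}\{\!\{vW\}\!\},\qquad \tilde G_2=Q^{-1}\Big\{\alpha\{\!\{z_2\}\!\}L_x\tilde G_1+\{\!\{z_1\}\!\}\{\!\{vW\}\!\}L_x\Big\}, \] \[ \tilde G_3=Q^{-1}\Big\{\alpha\{\!\{z_2\}\!\}L_y\tilde G_1+\{\!\{z_1\}\!\}\big(\{\!\{W\}\!\}^2-\{\!\{uW\}\!\}L_x\big)+\{\!\{z_1\}\!\}\{\!\{W\}\!\}\big(\{\!\{z_3\}\!\}L_x+\{\!\{z_4\}\!\}L_y\big)\Big\}, \] \[ \tilde G_4=\{\!\{W\}\!\}^{-1}\big(\alpha\tilde G_1+\{\!\{uW\}\!\}\tilde G_2+\{\!\{vW\}\!\}\tilde G_3\big). \] Then $Q=\{\!\{z_2\}\!\}W_LW_R>0$, so both fluxes are well defined, and they satisfy the entropy conservation conditions \[ [\![\mathbf V]\!]^T\tilde{\mathbf F}=[\![\psi_x]\!],\qquad [\![\mathbf V]\!]^T\tilde{\mathbf G}=[\![\psi_y]\!]. \] Moreover both fluxes are consistent: if the left and right states coincide, then $\tilde{\mathbf F}=\mathbf F(\mathbf U)$ and $\tilde{\mathbf G}=\mathbf G(\mathbf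 U)$ at that state.
   Context: Two-dimensional special relativistic hydrodynamics (speed of light $1$) with ideal equation of state $p=(\Gamma-1)\rho e$: $\mathbf U=(D,m_x,m_y,E)^T$ with $D=\rho W$, $(m_x,m_y)=\rho hW^2(u,v)$, $E=\rho hW^2-p$, $W=1/\sqrt{1-u^2-v^2}$, $h=1+\Gamma p/((\Gamma-1)\rho)$; fluxes $\mathbf F=(Du,\,m_xu+p,\,m_yu,\,m_x)^T$, $\mathbf G=(Dv,\,m_xv,\,m_yv+p,\,m_y)^T$. With $S=\ln p-\Gamma\ln\rho$, the entropy variables are $\mathbf V=\big(\frac{\Gamma-S}{\Gamma-1}+\frac{\rho}{p},\ \frac{\rho Wu}{p},\ \frac{\rho Wv}{p},\ -\frac{\rho W}{p}\big)^T$ and the potentials are $\psi_x=\rho Wu$, $\psi_y=\rho Wv$ (corresponding to the entropy $\eta=-\rho WS/(\Gamma-1)$ with fluxes $q_x=-\rho uWS/(\Gamma-1)$, $q_y=-\rho vWS/(\Gamma-1)$). For a quantity $a$ with values $a_L,a_R$: $[\![a]\!]=a_R-a_L$, $\{\!\{a\}\!\}=(a_L+a_R)/2$ (e.g. $\{\!\{uW\}\!\}=(u_LW_L+u_RW_R)/2$), and for positive $a$ the logarithmic mean $\{\!\{a\}\!\}^{\ln}=[\![a]\!]/[\![\ln a]\!]$ if $a_L\ne a_R$, $=a_L$ if $a_L=a_R$. The Lorentz means are $\mathcal L_x(u,v)=\dfrac{u_L+u_R}{\sqrt{1-u_L^2-v_L^2}\sqrt{1-u_R^2-v_R^2}\big(\sqrt{1-u_L^2-v_L^2}+\sqrt{1-u_R^2-v_R^2}\big)}$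 and $\mathcal L_y(u,v)$ the same with numerator $v_L+v_R$; they satisfy $[\![W]\!]=\mathcal L_x[\![u]\!]+\mathcal L_y[\![v]\!]$. *)

theory Defs
  imports Complex_Main
begin

text \<open>Primitive states are given by (rho, u, v, p); speed of light is 1.\<close>

definition lorW :: "real \<Rightarrow> real \<Rightarrow> real" where
  "lorW u v = 1 / sqrt (1 - u\<^sup>2 - v\<^sup>2)"

definition jmp :: "real \<Rightarrow> real \<Rightarrow> real" where
  "jmp aL aR = aR - aL"

definition avg :: "real \<Rightarrow> real \<Rightarrow> real" where
  "avg aL aR = (aL + aR) / 2"

definition lnmean :: "real \<Rightarrow> real \<Rightarrow> real" where
  "lnmean aL aR = (if aL = aR then aL else (aR - aL) / (ln aR - ln aL))"

definition lorLx :: "real \<Rightarrow> real \<Rightarrow> real \<Rightarrow> real \<Rightarrow> real" where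
  "lorLx uL vL uR vR = (uL + uR) /
     (sqrt (1 - uL\<^sup>2 - vL\<^sup>2) * sqrt (1 - uR\<^sup>2 - vR\<^sup>2)
      * (sqrt (1 - uL\<^sup>2 - vL\<^sup>2) + sqrt (1 - uR\<^sup>2 - vR\<^sup>2)))"

definition lorLy :: "real \<Rightarrow> real \<Rightarrow> real \<Rightarrow> real \<Rightarrow> real" where
  "lorLy uL vL uR vR = (vL + vR) /
     (sqrt (1 - uL\<^sup>2 - vL\<^sup>2) * sqrt (1 - uR\<^sup>2 - vR\<^sup>2)
      * (sqrt (1 - uL\<^sup>2 - vL\<^sup>2) + sqrt (1 - uR\<^sup>2 - vR\<^sup>2)))"

definition entS :: "real \<Rightarrow> real \<Rightarrow> real \<Rightarrow> real" where
  "entS \<Gamma> \<rho> p = ln p - \<Gamma> * ln \<rho>"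

definition entV :: "real \<Rightarrow> real \<Rightarrow> real \<Rightarrow> real \<Rightarrow> real \<Rightarrow> real \<times> real \<times> real \<times> real" where
  "entV \<Gamma> \<rho> u v p =
     ((\<Gamma> - entS \<Gamma> \<rho> p) / (\<Gamma> - 1) + \<rho> / p,
      \<rho> * lorW u v * u / p,
      \<rho> * lorW u v * v / p,
      - (\<rho> * lorW u v / p))"

definition psix :: "real \<Rightarrow> real \<Rightarrow> real \<Rightarrow> real" where
  "psix \<rho> u v = \<rho> * lorW u v * u"

definition psiy :: "real \<Rightarrow> real \<Rightarrow> real \<Rightarrow> real" where
  "psiy \<rho> u v = \<rho> * lorW u v * v"

definition dot4 :: "real \<times> real \<times> real \<times> real \<Rightarrow> real \<times> real \<times> real \<times> real \<Rightarrow> real" where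
  "dot4 a b = (case a of (a1, a2, a3, a4) \<Rightarrow> case b of (b1, b2, b3, b4) \<Rightarrow>
      a1 * b1 + a2 * b2 + a3 * b3 + a4 * b4)"

definition jmp4 :: "real \<times> real \<times> real \<times> real \<Rightarrow> real \<times> real \<times> real \<times> real \<Rightarrow> real \<times> real \<times> real \<times> real" where
  "jmp4 a b = (case a of (a1, a2, a3, a4) \<Rightarrow> case b of (b1, b2, b3, b4) \<Rightarrow>
      (b1 - a1, b2 - a2, b3 - a3, b4 - a4))"

definition enth :: "real \<Rightarrow> real \<Rightarrow> real \<Rightarrow> real" where
  "enth \<Gamma> \<rho> p = 1 + \<Gamma> * p / ((\<Gamma> - 1) * \<rho>)"

definition fluxF :: "real \<Rightarrow> real \<Rightarrow> real \<Rightarrow> real \<Rightarrow> real \<Rightarrow> real \<times> real \<times> real \<times> real" where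
  "fluxF \<Gamma> \<rho> u v p =
    (let W = lorW u v; h = enth \<Gamma> \<rho> p; D = \<rho> * W;
         mx = \<rho> * h * W\<^sup>2 * u; my = \<rho> * h * W\<^sup>2 * v
     in (D * u, mx * u + p, my * u, mx))"

definition fluxG :: "real \<Rightarrow> real \<Rightarrow> real \<Rightarrow> real \<Rightarrow> real \<Rightarrow> real \<times> real \<times> real \<times> real" where
  "fluxG \<Gamma> \<rho> u v p =
    (let W = lorW u v; h = enth \<Gamma> \<rho> p; D = \<rho> * W;
         mx = \<rho> * h * W\<^sup>2 * u; my = \<rho> * h * W\<^sup>2 * v
     in (D * v, mx * v, my * v + p, my))"

definition Qm :: "real \<Rightarrow> real \<Rightarrow> real \<Rightarrow> real \<Rightarrow> real \<Rightarrow> real \<Rightarrow> real \<Rightarrow> real \<Rightarrow> real" where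
  "Qm \<rho>L uL vL pL \<rho>R uR vR pR =
    (let WL = lorW uL vL; WR = lorW uR vR;
         z2 = avg (\<rho>L / pL) (\<rho>R / pR); Wm = avg WL WR;
         z3 = avg uL uR; z4 = avg vL vR;
         uW = avg (uL * WL) (uR * WR); vW = avg (vL * WL) (vR * WR);
         Lx = lorLx uL vL uR vR; Ly = lorLy uL vL uR vR
     in z2 * Wm\<^sup>2 + z2 * (z3 * Wm * Lx - uW * Lx + z4 * Wm * Ly - vW * Ly))"

definition alphaM :: "real \<Rightarrow> real \<Rightarrow> real \<Rightarrow> real \<Rightarrow> real \<Rightarrow> real" where
  "alphaM \<Gamma> \<rho>L pL \<rho>R pR = 1 + 1 / ((\<Gamma> - 1) * lnmean (\<rho>L / pL) (\<rho>R / pR))"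

definition fluxFt :: "real \<Rightarrow> real \<Rightarrow> real \<Rightarrow> real \<Rightarrow> real \<Rightarrow> real \<Rightarrow> real \<Rightarrow> real \<Rightarrow> real \<Rightarrow> real \<times> real \<times> real \<times> real" where
  "fluxFt \<Gamma> \<rho>L uL vL pL \<rho>R uR vR pR =
    (let WL = lorW uL vL; WR = lorW uR vR;
         z1 = avg \<rho>L \<rho>R; z2 = avg (\<rho>L / pL) (\<rho>R / pR); Wm = avg WL WR;
         z3 = avg uL uR; z4 = avg vL vR;
         uW = avg (uL * WL) (uR * WR); vW = avg (vL * WL) (vR * WR);
         Lx = lorLx uL vL uR vR; Ly = lorLy uL vL uR vR;
         \<alpha> = alphaM \<Gamma> \<rho>L pL \<rho>R pR; Q = Qm \<rho>L uL vL pL \<rho>R uR vR pR;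
         F1 = lnmean \<rho>L \<rho>R * uW;
         F2 = (\<alpha> * z2 * Lx * F1 + z1 * (Wm\<^sup>2 - vW * Ly) + z1 * Wm * (z3 * Lx + z4 * Ly)) / Q;
         F3 = (\<alpha> * z2 * Ly * F1 + z1 * uW * Ly) / Q;
         F4 = (\<alpha> * F1 + uW * F2 + vW * F3) / Wm
     in (F1, F2, F3, F4))"

definition fluxGt :: "real \<Rightarrow> real \<Rightarrow> real \<Rightarrow> real \<Rightarrow> real \<Rightarrow> real \<Rightarrow> real \<Rightarrow> real \<Rightarrow> real \<Rightarrow> real \<times> real \<times> real \<times> real" where
  "fluxGt \<Gamma> \<rho>L uL vL pL \<rho>R uR vR pR =
    (let WL = lorW uL vL; WR = lorW uR vR;
         z1 = avg \<rho>L \<rho>R; z2 = avg (\<rho>L / pL) (\<rho>R / pR); Wm = avg WL WR;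
         z3 = avg uL uR; z4 = avg vL vR;
         uW = avg (uL * WL) (uR * WR); vW = avg (vL * WL) (vR * WR);
         Lx = lorLx uL vL uR vR; Ly = lorLy uL vL uR vR;
         \<alpha> = alphaM \<Gamma> \<rho>L pL \<rho>R pR; Q = Qm \<rho>L uL vL pL \<rho>R uR vR pR;
         G1 = lnmean \<rho>L \<rho>R * vW;
         G2 = (\<alpha> * z2 * Lx * G1 + z1 * vW * Lx) / Q;
         G3 = (\<alpha> * z2 * Ly * G1 + z1 * (Wm\<^sup>2 - uW * Lx) + z1 * Wm * (z3 * Lx + z4 * Ly)) / Q;
         G4 = (\<alpha> * G1 + uW * G2 + vW * G3) / Wm
     in (G1, G2, G3, G4))"

end

theory Submission imports Defs begin

lemma poly_core:
  fixes m z3 z4 U Vv Lx Ly du dv :: real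
  shows "(m\<^sup>2 - Vv*Ly + m*z3*Lx + m*z4*Ly) * (m*(m*du + z3*(Lx*du+Ly*dv)) - (Lx*du+Ly*dv)*U)
        + U*Ly*(m*(m*dv + z4*(Lx*du+Ly*dv)) - (Lx*du+Ly*dv)*Vv)
      = (m\<^sup>2 + (z3*m - U)*Lx + (z4*m - Vv)*Ly) * m * (m*du + z3*(Lx*du+Ly*dv))"
  by (simp add: algebra_simps power2_eq_square)

lemma abstract_core:
  fixes m z z1 z3 z4 U Vv du dv dW dWu dWv dz dr Lx Ly a b G F1 F2 F3 F4 \<alpha> d1 q :: real
  assumes dW: "dW = Lx*du + Ly*dv"
    and dWu: "dWu = m*du + z3*dW" and dWv: "dWv = m*dv + z4*dW"
    and q: "q = m\<^sup>2 + (z3*m - U)*Lx + (z4*m - Vv)*Ly"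
    and nz: "a \<noteq> 0" "b \<noteq> 0" "G - 1 \<noteq> 0" "m \<noteq> 0" "q \<noteq> 0" "z \<noteq> 0"
    and al: "\<alpha> = 1 + 1/((G-1)*b)"
    and d1: "d1 = dr/a + dz/((G-1)*b) + dz"
    and F1: "F1 = a*U"
    and F2: "F2 = (\<alpha>*z*Lx*F1 + z1*(m\<^sup>2 - Vv*Ly) + z1*m*(z3*Lx + z4*Ly)) / (z*q)"
    and F3: "F3 = (\<alpha>*z*Ly*F1 + z1*U*Ly) / (z*q)"
    and F4: "F4 = (\<alpha>*F1 + U*F2 + Vv*F3) / m"
  shows "d1*F1 + (z*dWu + U*dz)*F2 + (z*dWv + Vv*dz)*F3 - (z*dW + m*dz)*F4 = z1*dWu + U*dr"
proof -
  define A where "A = m*dWu - dW*U"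
  define B where "B = m*dWv - dW*Vv"
  define P where "P = m\<^sup>2 - Vv*Ly + m*z3*Lx + m*z4*Ly"
  have e1: "(z*dW + m*dz)*F4 = (z*dW/m)*(\<alpha>*F1 + U*F2 + Vv*F3) + dz*(\<alpha>*F1 + U*F2 + Vv*F3)"
    using nz(4) by (simp add: F4 field_simps)
  have e2a: "d1*F1 - dz*\<alpha>*F1 = (dr/a)*F1"
    by (simp add: d1 al algebra_simps)
  have e2: "d1*F1 - dz*\<alpha>*F1 = dr*U"
    using e2a nz(1) by (simp add: F1)
  have LHS: "d1*F1 + (z*dWu + U*dz)*F2 + (z*dWv + Vv*dz)*F3 - (z*dW + m*dz)*F4
      = dr*U + (z*F2*A + z*F3*B - z*dW*\<alpha>*F1)/m"
    unfolding e1 A_def B_def using nz(4) e2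
    by (simp add: field_simps) (simp add: algebra_simps)?
  have zF2: "z*F2 = (\<alpha>*z*Lx*F1 + z1*P)/q" using nz(5,6) by (simp add: F2 P_def field_simps)
  have zF3: "z*F3 = (\<alpha>*z*Ly*F1 + z1*U*Ly)/q" using nz(5,6) by (simp add: F3 field_simps)
  have LAB: "Lx*A + Ly*B = q*dW"
    unfolding A_def B_def q dWu dWv dW by (simp add: algebra_simps power2_eq_square)
  have PAB: "P*A + U*Ly*B = q*m*dWu"
    unfolding A_def B_def P_def q dWu dWv dW by (rule poly_core)
  have "z*F2*A + z*F3*B - z*dW*\<alpha>*F1 = (\<alpha>*z*F1*(Lx*A + Ly*B) + z1*(P*A + U*Ly*B))/q - z*dW*\<alpha>*F1"
    unfolding zF2 zF3 using nz(5) by (simp add: field_simps)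
  also have "\<dots> = z1*m*dWu" unfolding LAB PAB using nz(5) by (simp add: field_simps)
  finally have "z*F2*A + z*F3*B - z*dW*\<alpha>*F1 = z1*m*dWu" .
  then show ?thesis unfolding LHS using nz(4) by simp
qed

lemma sfacts:
  fixes u v :: real
  assumes "u\<^sup>2 + v\<^sup>2 < 1"
  shows "sqrt (1 - u\<^sup>2 - v\<^sup>2) > 0" "(sqrt (1 - u\<^sup>2 - v\<^sup>2))\<^sup>2 = 1 - u\<^sup>2 - v\<^sup>2"
    "lorW u v = 1 / sqrt (1 - u\<^sup>2 - v\<^sup>2)" "lorW u v > 0"
  using assms by (auto simp: lorW_def)

lemma divhelp: "(p/(D::real))*x + (r/D)*y = (p*x + r*y)/D"
  by (simp add: add_divide_distrib)

lemma dW_lemma: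
  fixes uL vL uR vR :: real
  assumes "uL\<^sup>2 + vL\<^sup>2 < 1" "uR\<^sup>2 + vR\<^sup>2 < 1"
  shows "lorW uR vR - lorW uL vL = lorLx uL vL uR vR * (uR - uL) + lorLy uL vL uR vR * (vR - vL)"
proof -
  define sL where "sL = sqrt (1 - uL\<^sup>2 - vL\<^sup>2)"
  define sR where "sR = sqrt (1 - uR\<^sup>2 - vR\<^sup>2)"
  have pL: "sL > 0" and qL: "sL\<^sup>2 = 1 - uL\<^sup>2 - vL\<^sup>2" using sfacts[OF assms(1)] sL_def by auto
  have pR: "sR > 0" and qR: "sR\<^sup>2 = 1 - uR\<^sup>2 - vR\<^sup>2" using sfacts[OF assms(2)] sR_def by auto
  have key: "(uL+uR)*(uR-uL) + (vL+vR)*(vR-vL) = (sL - sR)*(sL + sR)"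
    using qL qR by (simp add: algebra_simps power2_eq_square)
  have "lorLx uL vL uR vR * (uR - uL) + lorLy uL vL uR vR * (vR - vL)
      = ((uL+uR)*(uR-uL) + (vL+vR)*(vR-vL)) / (sL*sR*(sL+sR))"
    unfolding lorLx_def lorLy_def sL_def[symmetric] sR_def[symmetric] by (rule divhelp)
  also have "\<dots> = (sL - sR) / (sL*sR)" proof -
    have "sL + sR \<noteq> 0" using pL pR by simp
    then show ?thesis unfolding key using pL pR by (simp add: mult.assoc[symmetric])
  qed
  also have "\<dots> = lorW uR vR - lorW uL vL"
    unfolding lorW_def sL_def[symmetric] sR_def[symmetric] using pL pR by (simp add: diff_divide_distrib)
  finally show ?thesis by simp
qed

lemma lnmean_facts:
  fixes x y :: real
  assumes "x > 0" "y > 0"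
  shows "lnmean x y > 0" "ln y - ln x = (y - x) / lnmean x y"
proof -
  show "lnmean x y > 0"
  proof (cases "x = y")
    case True then show ?thesis using assms by (simp add: lnmean_def)
  next
    case False
    then consider "x < y" | "y < x" by linarith
    then show ?thesis
    proof cases
      case 1 then have "ln x < ln y" using assms by simp
      then show ?thesis using 1 False by (simp add: lnmean_def)
    next
      case 2 then have "ln y < ln x" using assms by simp
      then show ?thesis using 2 False by (simp add: lnmean_def divide_neg_neg)
    qed
  qed
  show "ln y - ln x = (y - x) / lnmean x y"
  proof (cases "x = y")
    case True then show ?thesis by simp
  next
    case False
    then have "ln y \<noteq> ln x" using assms by simp
    moreover have "y - x \<noteq> 0" using False by simp
    ultimately show ?thesis using False by (simp add: lnmean_def)
  qed
qed

lemma q_lemma: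
  fixes WL WR uL uR vL vR Lx Ly :: real
  assumes "WR - WL = Lx*(uR-uL) + Ly*(vR-vL)"
  shows "(avg WL WR)\<^sup>2 + (avg uL uR * avg WL WR - avg (uL*WL) (uR*WR))*Lx
        + (avg vL vR * avg WL WR - avg (vL*WL) (vR*WR))*Ly = WL*WR"
proof -
  have "(avg WL WR)\<^sup>2 + (avg uL uR * avg WL WR - avg (uL*WL) (uR*WR))*Lx
        + (avg vL vR * avg WL WR - avg (vL*WL) (vR*WR))*Ly
      = (avg WL WR)\<^sup>2 - (WR-WL)*(Lx*(uR-uL) + Ly*(vR-vL))/4"
    unfolding avg_def power2_eq_square by (simp add: field_simps)
  also have "\<dots> = WL*WR" unfolding assms[symmetric] avg_def power2_eq_square by (simp add: field_simps)
  finally show ?thesis .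
qed


lemma consist_alg:
  fixes \<rho> p u v W \<alpha> h z :: real
  assumes z: "z = \<rho>/p" and pp: "p > 0" and rp: "\<rho> > 0" and Wp: "W > 0"
    and ah: "\<alpha> = (\<rho>*h - p)/\<rho>" and WW: "W\<^sup>2 * (u\<^sup>2 + v\<^sup>2) = W\<^sup>2 - 1"
  shows "(\<alpha>*z*(u*W^3)*(\<rho>*(u*W)) + \<rho>*(W\<^sup>2 - (v*W)*(v*W^3)) + \<rho>*W*(u*(u*W^3) + v*(v*W^3))) / (z*W\<^sup>2)
           = \<rho>*h*W\<^sup>2*u*u + p"
    and "(\<alpha>*z*(v*W^3)*(\<rho>*(u*W)) + \<rho>*(u*W)*(v*W^3)) / (z*W\<^sup>2) = \<rho>*h*W\<^sup>2*v*u"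
    and "(\<alpha>*(\<rho>*(u*W)) + (u*W)*((\<alpha>*z*(u*W^3)*(\<rho>*(u*W)) + \<rho>*(W\<^sup>2 - (v*W)*(v*W^3)) + \<rho>*W*(u*(u*W^3) + v*(v*W^3))) / (z*W\<^sup>2)) + (v*W)*((\<alpha>*z*(v*W^3)*(\<rho>*(u*W)) + \<rho>*(u*W)*(v*W^3)) / (z*W\<^sup>2)))/W = \<rho>*h*W\<^sup>2*u"
    and "(\<alpha>*z*(u*W^3)*(\<rho>*(v*W)) + \<rho>*(v*W)*(u*W^3)) / (z*W\<^sup>2) = \<rho>*h*W\<^sup>2*u*v"
    and "(\<alpha>*z*(v*W^3)*(\<rho>*(v*W)) + \<rho>*(W\<^sup>2 - (u*W)*(u*W^3)) + \<rho>*W*(u*(u*W^3) + v*(v*W^3))) / (z*W\<^sup>2)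
           = \<rho>*h*W\<^sup>2*v*v + p"
    and "(\<alpha>*(\<rho>*(v*W)) + (u*W)*((\<alpha>*z*(u*W^3)*(\<rho>*(v*W)) + \<rho>*(v*W)*(u*W^3)) / (z*W\<^sup>2)) + (v*W)*((\<alpha>*z*(v*W^3)*(\<rho>*(v*W)) + \<rho>*(W\<^sup>2 - (u*W)*(u*W^3)) + \<rho>*W*(u*(u*W^3) + v*(v*W^3))) / (z*W\<^sup>2)))/W = \<rho>*h*W\<^sup>2*v"
proof -
  let ?F2 = "(\<alpha>*z*(u*W^3)*(\<rho>*(u*W)) + \<rho>*(W\<^sup>2 - (v*W)*(v*W^3)) + \<rho>*W*(u*(u*W^3) + v*(v*W^3))) / (z*W\<^sup>2)"
  let ?F3 = "(\<alpha>*z*(v*W^3)*(\<rho>*(u*W)) + \<rho>*(u*W)*(v*W^3)) / (z*W\<^sup>2)"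
  let ?G2 = "(\<alpha>*z*(u*W^3)*(\<rho>*(v*W)) + \<rho>*(v*W)*(u*W^3)) / (z*W\<^sup>2)"
  let ?G3 = "(\<alpha>*z*(v*W^3)*(\<rho>*(v*W)) + \<rho>*(W\<^sup>2 - (u*W)*(u*W^3)) + \<rho>*W*(u*(u*W^3) + v*(v*W^3))) / (z*W\<^sup>2)"
  have nz: "z \<noteq> 0" "W \<noteq> 0" "p \<noteq> 0" "\<rho> \<noteq> 0" using z pp rp Wp by auto
  have az: "\<alpha>*z = (\<rho>*h - p)/p" using nz unfolding ah z by (simp add: field_simps)
  have rz: "\<rho> = z*p" using nz unfolding z by simp
  have f2: "?F2 = \<rho>*h*W\<^sup>2*u*u + p"
  proof -
    have "\<alpha>*z*(u*W^3)*(\<rho>*(u*W)) + \<rho>*(W\<^sup>2 - (v*W)*(v*W^3)) + \<rho>*W*(u*(u*W^3) + v*(v*W^3))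
        = (\<alpha>*z)*\<rho>*u*u*W^4 + \<rho>*W\<^sup>2 + \<rho>*u*u*W^4"
      by (simp add: algebra_simps power2_eq_square power3_eq_cube power4_eq_xxxx)
    also have "\<dots> = z*W\<^sup>2*(\<rho>*h*W\<^sup>2*u*u + p)" unfolding az using nz rz
      by (simp add: field_simps power2_eq_square power4_eq_xxxx)
    finally show ?thesis using nz by simp
  qed
  have f3: "?F3 = \<rho>*h*W\<^sup>2*v*u"
  proof -
    have "\<alpha>*z*(v*W^3)*(\<rho>*(u*W)) + \<rho>*(u*W)*(v*W^3) = (\<alpha>*z)*\<rho>*u*v*W^4 + \<rho>*u*v*W^4"
      by (simp add: algebra_simps power2_eq_square power3_eq_cube power4_eq_xxxx)
    also have "\<dots> = z*W\<^sup>2*(\<rho>*h*W\<^sup>2*v*u)" unfolding az using nz rz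
      by (simp add: field_simps power2_eq_square power4_eq_xxxx)
    finally show ?thesis using nz by simp
  qed
  have g2: "?G2 = \<rho>*h*W\<^sup>2*u*v"
  proof -
    have "\<alpha>*z*(u*W^3)*(\<rho>*(v*W)) + \<rho>*(v*W)*(u*W^3) = (\<alpha>*z)*\<rho>*u*v*W^4 + \<rho>*u*v*W^4"
      by (simp add: algebra_simps power2_eq_square power3_eq_cube power4_eq_xxxx)
    also have "\<dots> = z*W\<^sup>2*(\<rho>*h*W\<^sup>2*u*v)" unfolding az using nz rz
      by (simp add: field_simps power2_eq_square power4_eq_xxxx)
    finally show ?thesis using nz by simp
  qed
  have g3: "?G3 = \<rho>*h*W\<^sup>2*v*v + p"
  proof -
    have "\<alpha>*z*(v*W^3)*(\<rho>*(v*W)) + \<rho>*(W\<^sup>2 - (u*W)*(u*W^3)) + \<rho>*W*(u*(u*W^3) + v*(v*W^3))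
        = (\<alpha>*z)*\<rho>*v*v*W^4 + \<rho>*W\<^sup>2 + \<rho>*v*v*W^4"
      by (simp add: algebra_simps power2_eq_square power3_eq_cube power4_eq_xxxx)
    also have "\<dots> = z*W\<^sup>2*(\<rho>*h*W\<^sup>2*v*v + p)" unfolding az using nz rz
      by (simp add: field_simps power2_eq_square power4_eq_xxxx)
    finally show ?thesis using nz by simp
  qed
  have ar: "\<alpha>*\<rho> = \<rho>*h - p" using nz unfolding ah by simp
  have WW': "W\<^sup>2*u*u + W\<^sup>2*v*v = W\<^sup>2 - 1" using WW by (simp add: algebra_simps power2_eq_square)
  show "?F2 = \<rho>*h*W\<^sup>2*u*u + p" by (rule f2)
  show "?F3 = \<rho>*h*W\<^sup>2*v*u" by (rule f3)
  show "?G2 = \<rho>*h*W\<^sup>2*u*v" by (rule g2)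
  show "?G3 = \<rho>*h*W\<^sup>2*v*v + p" by (rule g3)
  have "\<alpha>*(\<rho>*(u*W)) + (u*W)*(\<rho>*h*W\<^sup>2*u*u + p) + (v*W)*(\<rho>*h*W\<^sup>2*v*u)
      = W*u*(\<alpha>*\<rho> + p + \<rho>*h*(W\<^sup>2*u*u + W\<^sup>2*v*v))" by (simp add: algebra_simps)
  also have "\<dots> = W*(\<rho>*h*W\<^sup>2*u)" unfolding ar WW' by (simp add: algebra_simps)
  finally show "(\<alpha>*(\<rho>*(u*W)) + (u*W)*?F2 + (v*W)*?F3)/W = \<rho>*h*W\<^sup>2*u"
    unfolding f2 f3 using nz by simp
  have "\<alpha>*(\<rho>*(v*W)) + (u*W)*(\<rho>*h*W\<^sup>2*u*v) + (v*W)*(\<rho>*h*W\<^sup>2*v*v + p)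
      = W*v*(\<alpha>*\<rho> + p + \<rho>*h*(W\<^sup>2*u*u + W\<^sup>2*v*v))" by (simp add: algebra_simps)
  also have "\<dots> = W*(\<rho>*h*W\<^sup>2*v)" unfolding ar WW' by (simp add: algebra_simps)
  finally show "(\<alpha>*(\<rho>*(v*W)) + (u*W)*?G2 + (v*W)*?G3)/W = \<rho>*h*W\<^sup>2*v"
    unfolding g2 g3 using nz by simp
qed

lemma consist:
  fixes \<Gamma> \<rho> u v p :: real
  assumes "\<Gamma> > 1" "\<rho> > 0" "p > 0" "u\<^sup>2 + v\<^sup>2 < 1"
  shows "fluxFt \<Gamma> \<rho> u v p \<rho> u v p = fluxF \<Gamma> \<rho> u v p \<and> fluxGt \<Gamma> \<rho> u v p \<rho> u v p = fluxG \<Gamma> \<rho> u v p"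
proof -
  define s where "s = sqrt (1 - u\<^sup>2 - v\<^sup>2)"
  have sp: "s > 0" and sq: "s\<^sup>2 = 1 - u\<^sup>2 - v\<^sup>2" using sfacts[OF assms(4)] s_def by auto
  define W where "W = 1/s"
  have Wp: "W > 0" using sp W_def by simp
  have WW: "W\<^sup>2 * (u\<^sup>2 + v\<^sup>2) = W\<^sup>2 - 1"
  proof -
    have "W\<^sup>2 * s\<^sup>2 = 1" using sp W_def by (simp add: power_divide)
    then show ?thesis using sq by (simp add: algebra_simps)
  qed
  have lW: "lorW u v = W" using sfacts[OF assms(4)] s_def W_def by simp
  have lx: "lorLx u v u v = u * W^3" unfolding lorLx_def s_def[symmetric] W_def using sp
    by (simp add: field_simps power3_eq_cube)
  have ly: "lorLy u v u v = v * W^3" unfolding lorLy_def s_def[symmetric] W_def using sp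
    by (simp add: field_simps power3_eq_cube)
  have av: "\<And>x. avg x x = x" by (simp add: avg_def)
  have ln: "\<And>x. lnmean x x = x" by (simp add: lnmean_def)
  have Q: "Qm \<rho> u v p \<rho> u v p = (\<rho>/p) * W\<^sup>2"
    unfolding Qm_def Let_def lW lx ly av by (simp add: algebra_simps power2_eq_square)
  define \<alpha> where "\<alpha> = alphaM \<Gamma> \<rho> p \<rho> p"
  define h where "h = enth \<Gamma> \<rho> p"
  have ah: "\<alpha> = (\<rho>*h - p)/\<rho>"
    unfolding \<alpha>_def h_def alphaM_def enth_def ln using assms by (simp add: field_simps)
  note C = consist_alg[OF refl assms(3) assms(2) Wp ah WW]
  show ?thesis
    unfolding fluxFt_def fluxGt_def fluxF_def fluxG_def Let_def Q lW lx ly av ln \<alpha>_def[symmetric] h_def[symmetric]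
    unfolding C(3) C(6) unfolding C(1) C(2) C(4) C(5) by simp
qed

theorem mainTheorem2:
  fixes \<Gamma> \<rho>L uL vL pL \<rho>R uR vR pR :: real
  assumes "\<Gamma> > 1"
    and "\<rho>L > 0" and "\<rho>R > 0" and "pL > 0" and "pR > 0"
    and "uL\<^sup>2 + vL\<^sup>2 < 1" and "uR\<^sup>2 + vR\<^sup>2 < 1"
  shows "Qm \<rho>L uL vL pL \<rho>R uR vR pR = avg (\<rho>L / pL) (\<rho>R / pR) * lorW uL vL * lorW uR vR
     \<and> Qm \<rho>L uL vL pL \<rho>R uR vR pR > 0
     \<and> dot4 (jmp4 (entV \<Gamma> \<rho>L uL vL pL) (entV \<Gamma> \<rho>R uR vR pR))
            (fluxFt \<Gamma> \<rho>L uL vL pL \<rho>R uR vR pR) = jmp (psix \<rho>L uL vL) (psix \<rho>R uR vR)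
     \<and> dot4 (jmp4 (entV \<Gamma> \<rho>L uL vL pL) (entV \<Gamma> \<rho>R uR vR pR))
            (fluxGt \<Gamma> \<rho>L uL vL pL \<rho>R uR vR pR) = jmp (psiy \<rho>L uL vL) (psiy \<rho>R uR vR)
     \<and> ((\<rho>L = \<rho>R \<and> uL = uR \<and> vL = vR \<and> pL = pR) \<longrightarrow>
          fluxFt \<Gamma> \<rho>L uL vL pL \<rho>R uR vR pR = fluxF \<Gamma> \<rho>L uL vL pL
        \<and> fluxGt \<Gamma> \<rho>L uL vL pL \<rho>R uR vR pR = fluxG \<Gamma> \<rho>L uL vL pL)"
proof -
  define WL where "WL = lorW uL vL"
  define WR where "WR = lorW uR vR"
  define Lx where "Lx = lorLx uL vL uR vR"
  define Ly where "Ly = lorLy uL vL uR vR"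
  define zL where "zL = \<rho>L / pL"
  define zR where "zR = \<rho>R / pR"
  define z where "z = avg zL zR"
  define m where "m = avg WL WR"
  define z1 where "z1 = avg \<rho>L \<rho>R"
  define z3 where "z3 = avg uL uR"
  define z4 where "z4 = avg vL vR"
  define U where "U = avg (uL*WL) (uR*WR)"
  define Vv where "Vv = avg (vL*WL) (vR*WR)"
  define a where "a = lnmean \<rho>L \<rho>R"
  define b where "b = lnmean zL zR"
  define \<alpha> where "\<alpha> = alphaM \<Gamma> \<rho>L pL \<rho>R pR"
  have WLp: "WL > 0" using sfacts(4)[OF assms(6)] WL_def by simp
  have WRp: "WR > 0" using sfacts(4)[OF assms(7)] WR_def by simp
  have zLp: "zL > 0" using assms zL_def by simp
  have zRp: "zR > 0" using assms zR_def by simp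
  have zp: "z > 0" using zLp zRp z_def avg_def by simp
  have mp: "m > 0" using WLp WRp m_def avg_def by simp
  have dW: "WR - WL = Lx*(uR-uL) + Ly*(vR-vL)"
    unfolding WL_def WR_def Lx_def Ly_def by (rule dW_lemma[OF assms(6,7)])
  have qq: "m\<^sup>2 + (z3*m - U)*Lx + (z4*m - Vv)*Ly = WL*WR"
    unfolding m_def z3_def z4_def U_def Vv_def by (rule q_lemma[OF dW])
  have Qeq: "Qm \<rho>L uL vL pL \<rho>R uR vR pR = z*(WL*WR)"
  proof -
    have "Qm \<rho>L uL vL pL \<rho>R uR vR pR = z*(m\<^sup>2 + (z3*m - U)*Lx + (z4*m - Vv)*Ly)"
      unfolding Qm_def Let_def WL_def[symmetric] WR_def[symmetric] Lx_def[symmetric] Ly_def[symmetric]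
        zL_def[symmetric] zR_def[symmetric] z_def[symmetric] m_def[symmetric] z3_def[symmetric]
        z4_def[symmetric] U_def[symmetric] Vv_def[symmetric]
      by (simp add: algebra_simps)
    then show ?thesis using qq by simp
  qed
  have P1: "Qm \<rho>L uL vL pL \<rho>R uR vR pR = avg (\<rho>L / pL) (\<rho>R / pR) * lorW uL vL * lorW uR vR"
    unfolding Qeq z_def zL_def zR_def WL_def WR_def by simp
  have P2: "Qm \<rho>L uL vL pL \<rho>R uR vR pR > 0" unfolding Qeq using zp WLp WRp by simp
  have ap: "a > 0" and lna: "ln \<rho>R - ln \<rho>L = (\<rho>R - \<rho>L)/a"
    using lnmean_facts[OF assms(2,3)] a_def by auto
  have bp: "b > 0" and lnb: "ln zR - ln zL = (zR - zL)/b"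
    using lnmean_facts[OF zLp zRp] b_def by auto
  have al: "\<alpha> = 1 + 1/((\<Gamma>-1)*b)" unfolding \<alpha>_def alphaM_def b_def zL_def zR_def by simp
  have G1: "\<Gamma> - 1 \<noteq> 0" using assms(1) by simp
  define d1 where "d1 = ((\<Gamma> - entS \<Gamma> \<rho>R pR) / (\<Gamma> - 1) + \<rho>R / pR) - ((\<Gamma> - entS \<Gamma> \<rho>L pL) / (\<Gamma> - 1) + \<rho>L / pL)"
  have d1eq: "d1 = (\<rho>R - \<rho>L)/a + (zR - zL)/((\<Gamma>-1)*b) + (zR - zL)"
  proof -
    have lzL: "ln zL = ln \<rho>L - ln pL" unfolding zL_def using assms by (simp add: ln_div)
    have lzR: "ln zR = ln \<rho>R - ln pR" unfolding zR_def using assms by (simp add: ln_div)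
    have e1: "d1 = (entS \<Gamma> \<rho>L pL - entS \<Gamma> \<rho>R pR)/(\<Gamma>-1) + (zR - zL)"
      unfolding d1_def zL_def[symmetric] zR_def[symmetric] by (simp add: diff_divide_distrib)
    have e2: "entS \<Gamma> \<rho>L pL - entS \<Gamma> \<rho>R pR = (\<Gamma>-1)*(ln \<rho>R - ln \<rho>L) + (ln zR - ln zL)"
      unfolding entS_def lzL lzR by (simp add: algebra_simps)
    have e3: "((\<Gamma>-1)*X + Y)/(\<Gamma>-1) = X + Y/(\<Gamma>-1)" for X Y
      using G1 by (simp add: add_divide_distrib)
    have "d1 = (ln \<rho>R - ln \<rho>L) + (ln zR - ln zL)/(\<Gamma>-1) + (zR - zL)"
      unfolding e1 e2 e3 by simp
    then show ?thesis unfolding lna lnb by (simp add: divide_divide_eq_left)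
  qed
  have dWu: "uR*WR - uL*WL = m*(uR-uL) + z3*(WR-WL)" unfolding m_def z3_def avg_def by (simp add: field_simps)
  have dWv: "vR*WR - vL*WL = m*(vR-vL) + z4*(WR-WL)" unfolding m_def z4_def avg_def by (simp add: field_simps)
  have rr: "\<rho>R * WR * uR / pR = zR*WR*uR" "\<rho>L * WL * uL / pL = zL*WL*uL"
     "\<rho>R * WR * vR / pR = zR*WR*vR" "\<rho>L * WL * vL / pL = zL*WL*vL"
     "\<rho>R * WR / pR = zR*WR" "\<rho>L * WL / pL = zL*WL"
    unfolding zL_def zR_def by simp_all
  have j2: "\<rho>R * WR * uR / pR - \<rho>L * WL * uL / pL = z*(uR*WR - uL*WL) + U*(zR - zL)"
    unfolding z_def U_def avg_def rr by (simp add: field_simps)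
  have j3: "\<rho>R * WR * vR / pR - \<rho>L * WL * vL / pL = z*(vR*WR - vL*WL) + Vv*(zR - zL)"
    unfolding z_def Vv_def avg_def rr by (simp add: field_simps)
  have j4: "- (\<rho>R * WR / pR) - - (\<rho>L * WL / pL) = - (z*(WR - WL) + m*(zR - zL))"
    unfolding z_def m_def avg_def rr by (simp add: field_simps)
  have jx: "\<rho>R * WR * uR - \<rho>L * WL * uL = z1*(uR*WR - uL*WL) + U*(\<rho>R - \<rho>L)"
    unfolding z1_def U_def avg_def by (simp add: field_simps)
  have jy: "\<rho>R * WR * vR - \<rho>L * WL * vL = z1*(vR*WR - vL*WL) + Vv*(\<rho>R - \<rho>L)"
    unfolding z1_def Vv_def avg_def by (simp add: field_simps)
  have entVL: "entV \<Gamma> \<rho>L uL vL pL = ((\<Gamma> - entS \<Gamma> \<rho>L pL) / (\<Gamma> - 1) + \<rho>L / pL, \<rho>L * WL * uL / pL, \<rho>L * WL * vL / pL, - (\<rho>L * WL / pL))"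
    unfolding entV_def WL_def by simp
  have entVR: "entV \<Gamma> \<rho>R uR vR pR = ((\<Gamma> - entS \<Gamma> \<rho>R pR) / (\<Gamma> - 1) + \<rho>R / pR, \<rho>R * WR * uR / pR, \<rho>R * WR * vR / pR, - (\<rho>R * WR / pR))"
    unfolding entV_def WR_def by simp
  have dotj: "dot4 (jmp4 (entV \<Gamma> \<rho>L uL vL pL) (entV \<Gamma> \<rho>R uR vR pR)) (F1, F2, F3, F4)
      = d1*F1 + (z*(uR*WR - uL*WL) + U*(zR - zL))*F2 + (z*(vR*WR - vL*WL) + Vv*(zR - zL))*F3
        - (z*(WR - WL) + m*(zR - zL))*F4" for F1 F2 F3 F4
  proof -
    have j4': "\<rho>L * WL / pL - \<rho>R * WR / pR = - (z*(WR - WL) + m*(zR - zL))" using j4 by simp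
    show ?thesis
      unfolding entVL entVR dot4_def jmp4_def j2[symmetric] j3[symmetric] by (simp add: d1_def j4') (simp add: algebra_simps)
  qed
  have nz: "a \<noteq> 0" "b \<noteq> 0" "\<Gamma> - 1 \<noteq> 0" "m \<noteq> 0" "WL*WR \<noteq> 0" "z \<noteq> 0"
    using ap bp G1 mp WLp WRp zp by auto
  define F1 where "F1 = a*U"
  define F2 where "F2 = (\<alpha>*z*Lx*F1 + z1*(m\<^sup>2 - Vv*Ly) + z1*m*(z3*Lx + z4*Ly)) / (z*(WL*WR))"
  define F3 where "F3 = (\<alpha>*z*Ly*F1 + z1*U*Ly) / (z*(WL*WR))"
  define F4 where "F4 = (\<alpha>*F1 + U*F2 + Vv*F3) / m"
  have FF: "fluxFt \<Gamma> \<rho>L uL vL pL \<rho>R uR vR pR = (F1, F2, F3, F4)"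
    unfolding fluxFt_def Let_def Qeq WL_def[symmetric] WR_def[symmetric] Lx_def[symmetric] Ly_def[symmetric]
        zL_def[symmetric] zR_def[symmetric] z_def[symmetric] m_def[symmetric] z3_def[symmetric]
        z4_def[symmetric] U_def[symmetric] Vv_def[symmetric] z1_def[symmetric] a_def[symmetric] \<alpha>_def[symmetric]
        F1_def F2_def F3_def F4_def
    by simp
  have P3: "dot4 (jmp4 (entV \<Gamma> \<rho>L uL vL pL) (entV \<Gamma> \<rho>R uR vR pR))
            (fluxFt \<Gamma> \<rho>L uL vL pL \<rho>R uR vR pR) = jmp (psix \<rho>L uL vL) (psix \<rho>R uR vR)"
    unfolding FF dotj jmp_def psix_def WL_def[symmetric] WR_def[symmetric] jx
    by (rule abstract_core[OF dW dWu dWv qq[symmetric] nz al d1eq F1_def F2_def F3_def F4_def])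
  define G1 where "G1 = a*Vv"
  define G2 where "G2 = (\<alpha>*z*Lx*G1 + z1*Vv*Lx) / (z*(WL*WR))"
  define G3 where "G3 = (\<alpha>*z*Ly*G1 + z1*(m\<^sup>2 - U*Lx) + z1*m*(z3*Lx + z4*Ly)) / (z*(WL*WR))"
  define G4 where "G4 = (\<alpha>*G1 + U*G2 + Vv*G3) / m"
  have GG: "fluxGt \<Gamma> \<rho>L uL vL pL \<rho>R uR vR pR = (G1, G2, G3, G4)"
    unfolding fluxGt_def Let_def Qeq WL_def[symmetric] WR_def[symmetric] Lx_def[symmetric] Ly_def[symmetric]
        zL_def[symmetric] zR_def[symmetric] z_def[symmetric] m_def[symmetric] z3_def[symmetric]
        z4_def[symmetric] U_def[symmetric] Vv_def[symmetric] z1_def[symmetric] a_def[symmetric] \<alpha>_def[symmetric]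
        G1_def G2_def G3_def G4_def
    by simp
  have dW': "WR - WL = Ly*(vR-vL) + Lx*(uR-uL)" using dW by simp
  have qq': "WL*WR = m\<^sup>2 + (z4*m - Vv)*Ly + (z3*m - U)*Lx" using qq by simp
  have G3': "G3 = (\<alpha>*z*Ly*G1 + z1*(m\<^sup>2 - U*Lx) + z1*m*(z4*Ly + z3*Lx)) / (z*(WL*WR))"
    unfolding G3_def by (simp add: add.commute)
  have G4': "G4 = (\<alpha>*G1 + Vv*G3 + U*G2) / m" unfolding G4_def by (simp add: add_ac)
  have core: "d1*G1 + (z*(vR*WR - vL*WL) + Vv*(zR - zL))*G3 + (z*(uR*WR - uL*WL) + U*(zR - zL))*G2
        - (z*(WR - WL) + m*(zR - zL))*G4 = z1*(vR*WR - vL*WL) + Vv*(\<rho>R - \<rho>L)"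
    by (rule abstract_core[OF dW' dWv dWu qq' nz al d1eq G1_def G3' G2_def G4'])
  have P4: "dot4 (jmp4 (entV \<Gamma> \<rho>L uL vL pL) (entV \<Gamma> \<rho>R uR vR pR))
            (fluxGt \<Gamma> \<rho>L uL vL pL \<rho>R uR vR pR) = jmp (psiy \<rho>L uL vL) (psiy \<rho>R uR vR)"
    unfolding GG dotj jmp_def psiy_def WL_def[symmetric] WR_def[symmetric] jy core[symmetric]
    by (simp add: algebra_simps)
  have P5: "((\<rho>L = \<rho>R \<and> uL = uR \<and> vL = vR \<and> pL = pR) \<longrightarrow>
          fluxFt \<Gamma> \<rho>L uL vL pL \<rho>R uR vR pR = fluxF \<Gamma> \<rho>L uL vL pL
        \<and> fluxGt \<Gamma> \<rho>L uL vL pL \<rho>R uR vR pR = fluxG \<Gamma> \<rho>L uL vL pL)"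
    using consist[OF assms(1,2,4,6)] by auto
  show ?thesis using P1 P2 P3 P4 P5 by blast
qed

end
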